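(* Let $F$ be a graph on $\binom{n}{k}$ vertices with $k=n/2$, and let $\mathcal{R}$ be a $k$-reconstruction family of $F$. Then $\overline{\mathcal{R}}=\{V(F)\setminus X:X\in\mathcal{R}\}$ is a $k$-reconstruction family of $F$.
   Context: For a graph $F$ on $\binom{n}{k}$ vertices and a family $\mathcal{R}$ of subsets of $V(F)$, let $S_{\mathcal{R}}(A)=\{X\in\mathcal{R}:A\in X\}$ for $A\in V(F)$. $\mathcal{R}$ is a $k$-reconstruction family of $F$ if (1) $|X|=\binom{n-1}{k-1}$ for all $X\in\mathcal{R}$; (2) $|S_{\mathcal{R}}(A)|=k$ for all $A\in V(F)$; (3) for every edge $AB$ of $F$, $|S_{\mathcal{R}}(A)\cap S_{\mathcal{R}}(B)|=k-1$. *)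

theory Defs
  imports Main
begin

definition simple_graph :: "'a set \<Rightarrow> ('a \<Rightarrow> 'a \<Rightarrow> bool) \<Rightarrow> bool" where
  "simple_graph V E \<longleftrightarrow> finite V \<and>
     (\<forall>A B. E A B \<longrightarrow> A \<in> V \<and> B \<in> V \<and> A \<noteq> B \<and> E B A)"

definition S_fam :: "'a set set \<Rightarrow> 'a \<Rightarrow> 'a set set" where
  "S_fam R A = {X \<in> R. A \<in> X}"

definition k_reconstruction_family ::
  "nat \<Rightarrow> nat \<Rightarrow> 'a set \<Rightarrow> ('a \<Rightarrow> 'a \<Rightarrow> bool) \<Rightarrow> 'a set set \<Rightarrow> bool" where
  "k_reconstruction_family n k V E R \<longleftrightarrow>
     (\<forall>X\<in>R. X \<subseteq> V) \<and>
     (\<forall>X\<in>R. card X = (n - 1) choose (k - 1)) \<and>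
     (\<forall>A\<in>V. card (S_fam R A) = k) \<and>
     (\<forall>A B. A \<in> V \<longrightarrow> B \<in> V \<longrightarrow> E A B \<longrightarrow> card (S_fam R A \<inter> S_fam R B) = k - 1)"

end

theory Submission
  imports Defs
begin

lemma binom_half: "(2 * Suc m) choose (Suc m) = 2 * ((2 * Suc m - 1) choose (Suc m - 1))"
proof -
  have a: "2 * Suc m = Suc (Suc (2*m))" by simp
  have "(Suc (Suc (2*m))) choose (Suc m) = ((Suc (2*m)) choose m) + ((Suc (2*m)) choose (Suc m))"
    by simp
  moreover have "(Suc (2*m)) choose (Suc m) = (Suc (2*m)) choose m"
    using binomial_symmetric[of "Suc m" "Suc (2*m)"] by simp
  ultimately show ?thesis by (simp add: a)
qed

lemma double_count:
  assumes "finite V" "finite R" "\<forall>X\<in>R. X \<subseteq> V"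
  shows "(\<Sum>A\<in>V. card (S_fam R A)) = (\<Sum>X\<in>R. card X)"
proof -
  have "(\<Sum>A\<in>V. card (S_fam R A)) = (\<Sum>A\<in>V. \<Sum>X\<in>R. if A \<in> X then 1 else 0)"
    unfolding S_fam_def using assms by (simp add: sum.If_cases Int_def)
  also have "\<dots> = (\<Sum>X\<in>R. \<Sum>A\<in>V. if A \<in> X then 1 else 0)" by (rule sum.swap)
  also have "\<dots> = (\<Sum>X\<in>R. card X)"
  proof (rule sum.cong[OF refl])
    fix X assume "X \<in> R"
    then have "X \<subseteq> V" using assms by blast
    then have "V \<inter> {A. A \<in> X} = X" by blast
    then show "(\<Sum>A\<in>V. if A \<in> X then 1 else 0) = card X"
      using assms(1) by (simp add: sum.If_cases)
  qed
  finally show ?thesis .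
qed

theorem proposition12:
  fixes n k :: nat and V :: "'a set" and E :: "'a \<Rightarrow> 'a \<Rightarrow> bool" and R :: "'a set set"
  assumes "simple_graph V E"
    and "card V = n choose k"
    and "n = 2 * k"
    and "k_reconstruction_family n k V E R"
  shows "k_reconstruction_family n k V E ((\<lambda>X. V - X) ` R)"
proof -
  let ?c = "(n - 1) choose (k - 1)"
  have fV: "finite V" using assms(1) simple_graph_def by blast
  have sub: "\<forall>X\<in>R. X \<subseteq> V" and cX: "\<forall>X\<in>R. card X = ?c"
    and cS: "\<forall>A\<in>V. card (S_fam R A) = k"
    and cE: "\<forall>A B. A \<in> V \<longrightarrow> B \<in> V \<longrightarrow> E A B \<longrightarrow> card (S_fam R A \<inter> S_fam R B) = k - 1"
    using assms(4) unfolding k_reconstruction_family_def by auto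
  have fR: "finite R" using sub fV
    by (meson Pow_iff finite_Pow_iff rev_finite_subset subsetI)
  have dc: "card V * k = card R * ?c"
    using double_count[OF fV fR sub] cS cX by simp
  have cR: "card R = 2 * k"
  proof (cases k)
    case 0
    then show ?thesis using dc assms(3) by simp
  next
    case (Suc m)
    then have "card V = 2 * ?c" using assms(2,3) binom_half by simp
    moreover have "?c > 0" using assms(3) Suc by simp
    ultimately show ?thesis using dc by simp
  qed
  have inj: "inj_on (\<lambda>X. V - X) R"
    by (rule inj_onI) (use sub in blast)
  have compS: "S_fam ((\<lambda>X. V - X) ` R) A = (\<lambda>X. V - X) ` (R - S_fam R A)" if "A \<in> V" for A
    using that unfolding S_fam_def by auto
  have cardS: "card (S_fam ((\<lambda>X. V - X) ` R) A) = k" if "A \<in> V" for A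
  proof -
    have "card (S_fam ((\<lambda>X. V - X) ` R) A) = card (R - S_fam R A)"
      using compS[OF that] card_image inj inj_on_subset by (metis Diff_subset)
    also have "\<dots> = card R - card (S_fam R A)"
      by (rule card_Diff_subset) (use fR in \<open>auto simp: S_fam_def\<close>)
    finally show ?thesis using cR cS that by simp
  qed
  have cardE: "card (S_fam ((\<lambda>X. V - X) ` R) A \<inter> S_fam ((\<lambda>X. V - X) ` R) B) = k - 1"
    if "A \<in> V" "B \<in> V" "E A B" for A B
  proof -
    have "S_fam ((\<lambda>X. V - X) ` R) A \<inter> S_fam ((\<lambda>X. V - X) ` R) B
        = (\<lambda>X. V - X) ` (R - (S_fam R A \<union> S_fam R B))"
      using that(1,2) sub unfolding S_fam_def by auto
    then have "card (S_fam ((\<lambda>X. V - X) ` R) A \<inter> S_fam ((\<lambda>X. V - X) ` R) B)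
        = card (R - (S_fam R A \<union> S_fam R B))"
      using card_image inj inj_on_subset by (metis Diff_subset)
    also have "\<dots> = card R - card (S_fam R A \<union> S_fam R B)"
      by (rule card_Diff_subset) (use fR in \<open>auto simp: S_fam_def\<close>)
    also have "card (S_fam R A \<union> S_fam R B) = k + k - (k - 1)"
    proof -
      have f: "finite (S_fam R A)" "finite (S_fam R B)" using fR by (auto simp: S_fam_def)
      have "card (S_fam R A \<union> S_fam R B) + card (S_fam R A \<inter> S_fam R B) = k + k"
        using card_Un_Int[OF f] cS that by simp
      then show ?thesis using cE that by simp
    qed
    finally show ?thesis using cR by simp
  qed
  have cardX: "\<forall>X\<in>(\<lambda>X. V - X) ` R. card X = ?c"
  proof
    fix Y assume "Y \<in> (\<lambda>X. V - X) ` R"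
    then obtain X where X: "X \<in> R" "Y = V - X" by blast
    have "card Y = card V - ?c" using X sub cX fV card_Diff_subset[of X V] finite_subset[of X V] by simp
    moreover have "k > 0" using X cS cX sub
    proof (cases k)
      case 0
      then have "R = {}" using cR fR by simp
      then show ?thesis using X by simp
    qed simp
    then obtain m where "k = Suc m" using gr0_implies_Suc by blast
    then have "card V = 2 * ?c" using assms(2,3) binom_half by simp
    ultimately show "card Y = ?c" by simp
  qed
  show ?thesis unfolding k_reconstruction_family_def
    using cardS cardE cardX by auto
qed

end
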